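(* Let $k\ge r\ge3$ and $p,t\ge 0$ be integers and let $\pi\in\mathbb{C}_{<}(k,r|p,t)$ with $\pi^{(2)}_p\ge 2t+6$. Then $2t+2$ and $2t+4$ do not both occur as parts of $\pi$.
   Context: A partition $\pi=(\pi_1,\dots,\pi_\ell)$ is a finite non-increasing sequence of positive integers; "$a$ occurs in $\pi$" means $a=\pi_i$ for some $i$. Göllnitz–Gordon marking: $GG(\pi)$ assigns a positive integer (mark) to each part, processing the parts from smallest to largest; $\pi_i$ receives the smallest positive integer different from the marks of all parts $\pi_g$ with $g>i$ and $\pi_i-\pi_g\le 2$, where $\pi_i-\pi_g<2$ is required when $\pi_i$ is odd. An "$r$-marked part $a$" is a part equal to $a$ with mark $r$. $N_i(\pi)$ is the number of parts with mark $i$; $\pi^{(i)}_1\ge\dots\ge\pi^{(i)}_{N_i(\pi)}$ are the parts with mark $i$, with $\pi^{(i)}_0=+\infty$, $\pi^{(i)}_{N_i(\pi)+1}=-\infty$. $\mathbb{C}(k,r)$: partitions with (i) no odd part repeated; (ii) $\pi_i\ge\pi_{i+k-1}+2$ for $1\le i\le\ell-k+1$, strict if $\pi_i$ even; (iii) at most $r-1$ parts $\le 2$. Starting types: for $\pi\in\mathbb{C}(k,r)$ with $N_2=N_2(\pi)\ge1$, let $l$ be the largest integer in $\{0,\dots,N_2\}$ such that no odd part of $\pi$ is $\ge\pi^{(2)}_l$; for $l<i\le N_2$, $\pi^{(2)}_i$ has type $s_{-1}$. For $b=1,\dots,l$ in increasing order, type and auxiliary $\sigma_b$: for $b=1$: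 Case 1: 1-marked part $\pi^{(2)}_1-1$ exists and $\pi^{(2)}_1+2$ does not occur: type $s_0$, $\sigma_1=\pi^{(2)}_1-1$; Case 2: 1-marked $\pi^{(2)}_1-2$ exists and $\pi^{(2)}_1+2$ does not occur: type $s_1$, $\sigma_1=\pi^{(2)}_1-2$; Case 3: 1-marked $\pi^{(2)}_1+2$ exists: type $s_2$, $\sigma_1=\pi^{(2)}_1+2$; Case 4: 1-marked $\pi^{(2)}_1$ exists: type $s_3$, $\sigma_1=\pi^{(2)}_1$. For $2\le b\le l$: Case 1: 1-marked $\pi^{(2)}_b-1$ exists and, if a 1-marked $\pi^{(2)}_b+2$ exists, $\sigma_{b-1}=\pi^{(2)}_b+2$: type $s_0$, $\sigma_b=\pi^{(2)}_b-1$; Case 2: same with $\pi^{(2)}_b-2$: type $s_1$, $\sigma_b=\pi^{(2)}_b-2$; Case 3: 1-marked $\pi^{(2)}_b+2$ exists and $\sigma_{b-1}\ne\pi^{(2)}_b+2$: type $s_2$, $\sigma_b=\pi^{(2)}_b+2$; Case 4: 1-marked $\pi^{(2)}_b$ exists: type $s_3$, $\sigma_b=\pi^{(2)}_b$. $\mathbb{C}_{<}(k,r|p,t)$: the set of $\pi\in\mathbb{C}(k,r)$ such that (1) no odd part is $\ge 2t+1$; (2) $\pi^{(2)}_{p+1}<2t+1<\pi^{(2)}_p$ (in particular $p\le N_2(\pi)$); (3) if $\pi^{(2)}_p=2t+2$ then it is of starting type $s_2$ or $s_3$; (4) if $\pi^{(2)}_{p+1}=2t$ then it is of starting type $s_0$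 or $s_1$. *)

theory Defs
  imports Main "HOL-Library.Extended_Real"
begin

(* A partition is represented as a list of positive naturals in non-increasing
   order; pi_i (1-based) is xs ! (i-1). *)
definition is_partition :: "nat list \<Rightarrow> bool" where
  "is_partition xs \<longleftrightarrow> sorted_wrt (\<ge>) xs \<and> (\<forall>x\<in>set xs. 0 < x)"

(* Goellnitz-Gordon marking: marks aligned with the list; parts processed from
   the smallest (end of the list) to the largest (head of the list). *)
fun gg :: "nat list \<Rightarrow> nat list" where
  "gg [] = []"
| "gg (x # rest) =
     (LEAST m. 0 < m \<and>
        m \<notin> {gg rest ! j | j. j < length rest \<and>
                   int x - int (rest ! j) \<le> 2 \<and>
                   (odd x \<longrightarrow> int x - int (rest ! j) < 2)}) # gg rest"

definition N_mark :: "nat list \<Rightarrow> nat \<Rightarrow> nat" where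
  "N_mark xs i = length (filter (\<lambda>j. gg xs ! j = i) [0..<length xs])"

definition marked_parts :: "nat list \<Rightarrow> nat \<Rightarrow> nat list" where
  "marked_parts xs i = map (\<lambda>j. xs ! j) (filter (\<lambda>j. gg xs ! j = i) [0..<length xs])"

definition mp :: "nat list \<Rightarrow> nat \<Rightarrow> nat \<Rightarrow> nat" where
  "mp xs i j = marked_parts xs i ! (j - 1)"

definition mpe :: "nat list \<Rightarrow> nat \<Rightarrow> nat \<Rightarrow> ereal" where
  "mpe xs i j = (if j = 0 then \<infinity>
                 else if j \<le> N_mark xs i then ereal (real (mp xs i j))
                 else -\<infinity>)"

definition one_marked :: "nat list \<Rightarrow> int \<Rightarrow> bool" where
  "one_marked xs a \<longleftrightarrow> (\<exists>j<length xs. int (xs ! j) = a \<and> gg xs ! j = 1)"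

definition occurs :: "nat list \<Rightarrow> int \<Rightarrow> bool" where
  "occurs xs a \<longleftrightarrow> (\<exists>j<length xs. int (xs ! j) = a)"

definition C_kr :: "nat \<Rightarrow> nat \<Rightarrow> nat list \<Rightarrow> bool" where
  "C_kr k r xs \<longleftrightarrow> is_partition xs
     \<and> (\<forall>i<length xs. \<forall>j<length xs. i \<noteq> j \<and> xs ! i = xs ! j \<longrightarrow> even (xs ! i))
     \<and> (\<forall>i. i + k - 1 < length xs \<longrightarrow>
           xs ! (i + k - 1) + 2 \<le> xs ! i \<and>
           (even (xs ! i) \<longrightarrow> xs ! (i + k - 1) + 2 < xs ! i))
     \<and> length (filter (\<lambda>x. x \<le> 2) xs) \<le> r - 1"

datatype stype = S_m1 | S0 | S1 | S2 | S3 | S_none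

definition start_l :: "nat list \<Rightarrow> nat" where
  "start_l xs = (GREATEST l. l \<le> N_mark xs 2 \<and>
                  (\<forall>x\<in>set xs. odd x \<longrightarrow> ereal (real x) < mpe xs 2 l))"

(* type and auxiliary sigma_b for b = 1, ..., l (cases tried in order) *)
fun start_aux :: "nat list \<Rightarrow> nat \<Rightarrow> stype \<times> int" where
  "start_aux xs 0 = (S_none, 0)"
| "start_aux xs (Suc 0) =
     (let q = int (mp xs 2 1) in
      if one_marked xs (q - 1) \<and> \<not> occurs xs (q + 2) then (S0, q - 1)
      else if one_marked xs (q - 2) \<and> \<not> occurs xs (q + 2) then (S1, q - 2)
      else if one_marked xs (q + 2) then (S2, q + 2)
      else if one_marked xs q then (S3, q)
      else (S_none, 0))"
| "start_aux xs (Suc (Suc b)) =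
     (let q = int (mp xs 2 (Suc (Suc b))); s = snd (start_aux xs (Suc b)) in
      if one_marked xs (q - 1) \<and> (one_marked xs (q + 2) \<longrightarrow> s = q + 2) then (S0, q - 1)
      else if one_marked xs (q - 2) \<and> (one_marked xs (q + 2) \<longrightarrow> s = q + 2) then (S1, q - 2)
      else if one_marked xs (q + 2) \<and> s \<noteq> q + 2 then (S2, q + 2)
      else if one_marked xs q then (S3, q)
      else (S_none, 0))"

definition start_type :: "nat list \<Rightarrow> nat \<Rightarrow> stype" where
  "start_type xs b =
     (if 1 \<le> b \<and> b \<le> start_l xs then fst (start_aux xs b)
      else if start_l xs < b \<and> b \<le> N_mark xs 2 then S_m1
      else S_none)"

definition C_less :: "nat \<Rightarrow> nat \<Rightarrow> nat \<Rightarrow> nat \<Rightarrow> nat list \<Rightarrow> bool" where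
  "C_less k r p t xs \<longleftrightarrow> C_kr k r xs
     \<and> (\<forall>x\<in>set xs. odd x \<longrightarrow> x < 2 * t + 1)
     \<and> p \<le> N_mark xs 2
     \<and> mpe xs 2 (p + 1) < ereal (real (2 * t + 1))
     \<and> ereal (real (2 * t + 1)) < mpe xs 2 p
     \<and> (mpe xs 2 p = ereal (real (2 * t + 2)) \<longrightarrow> start_type xs p \<in> {S2, S3})
     \<and> (mpe xs 2 (p + 1) = ereal (real (2 * t)) \<longrightarrow> start_type xs (p + 1) \<in> {S0, S1})"

end

theory Submission imports Defs begin

definition conf :: "nat list \<Rightarrow> nat \<Rightarrow> nat \<Rightarrow> bool" where
  "conf xs j i \<longleftrightarrow> j < i \<and> i < length xs \<and> int (xs!j) - int (xs!i) \<le> 2 \<and>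
     (odd (xs!j) \<longrightarrow> int (xs!j) - int (xs!i) < 2)"

lemma gg_len[simp]: "length (gg xs) = length xs"
  by (induction xs) auto

lemma gg_nth: "j < length xs \<Longrightarrow> gg xs ! j = (LEAST m. 0 < m \<and> m \<notin> {gg xs ! i | i. conf xs j i})"
proof (induction xs arbitrary: j)
  case Nil then show ?case by simp
next
  case (Cons x rest)
  show ?case
  proof (cases j)
    case 0
    have eq: "{gg rest ! j | j. j < length rest \<and> int x - int (rest ! j) \<le> 2 \<and>
                   (odd x \<longrightarrow> int x - int (rest ! j) < 2)} = {gg (x#rest) ! i | i. conf (x#rest) 0 i}"
      unfolding conf_def
      apply (rule set_eqI; rule iffI)
       apply clarsimp
       apply (rule_tac x="Suc j" in exI; simp)
      apply clarsimp
      subgoal for i by (cases i; auto)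
      done
    show ?thesis unfolding 0 by (subst eq[symmetric]) simp
  next
    case (Suc j')
    have eq: "{gg rest ! i | i. conf rest j' i} = {gg (x#rest) ! i | i. conf (x#rest) j i}"
      unfolding conf_def Suc
      apply (rule set_eqI; rule iffI)
       apply clarsimp
       apply (rule_tac x="Suc i" in exI; simp)
      apply clarsimp
      subgoal for i by (cases i; auto)
      done
    show ?thesis using Cons.IH[of j'] Cons.prems unfolding Suc by (subst eq[unfolded Suc, symmetric]) simp
  qed
qed

lemma conf_fin: "finite {gg xs ! i | i. conf xs j i}"
proof -
  have "{gg xs ! i | i. conf xs j i} \<subseteq> (\<lambda>i. gg xs ! i) ` {..<length xs}"
    unfolding conf_def by auto
  then show ?thesis using finite_subset by blast
qed

lemma gg_ex: "\<exists>m. 0 < m \<and> m \<notin> {gg xs ! i | i. conf xs j i}"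
proof -
  let ?S = "{gg xs ! i | i. conf xs j i}"
  have "\<And>y. y \<in> ?S \<Longrightarrow> y \<le> Max (insert 0 ?S)"
    using conf_fin by (intro Max_ge) auto
  then have "Suc (Max (insert 0 ?S)) \<notin> ?S" by fastforce
  then show ?thesis by blast
qed

lemma gg_prop: "j < length xs \<Longrightarrow> 0 < gg xs ! j \<and> gg xs ! j \<notin> {gg xs ! i | i. conf xs j i}"
proof -
  assume "j < length xs"
  then have e: "gg xs ! j = (LEAST m. 0 < m \<and> m \<notin> {gg xs ! i | i. conf xs j i})" by (rule gg_nth)
  have "0 < (LEAST m. 0 < m \<and> m \<notin> {gg xs ! i | i. conf xs j i}) \<and> (LEAST m. 0 < m \<and> m \<notin> {gg xs ! i | i. conf xs j i}) \<notin> {gg xs ! i | i. conf xs j i}"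
    by (rule LeastI_ex[OF gg_ex[of xs j]])
  from this[folded e] show ?thesis .
qed

lemma gg_pos: "j < length xs \<Longrightarrow> 0 < gg xs ! j"
  using gg_prop by blast

lemma gg_diff: "conf xs j i \<Longrightarrow> gg xs ! j \<noteq> gg xs ! i"
proof -
  assume c: "conf xs j i"
  then have "j < length xs" unfolding conf_def by auto
  then have "gg xs ! j \<notin> {gg xs ! i | i. conf xs j i}" using gg_prop by blast
  then show ?thesis using c by blast
qed

lemma gg_min: "j < length xs \<Longrightarrow> 0 < m \<Longrightarrow> m < gg xs ! j \<Longrightarrow> \<exists>i. conf xs j i \<and> gg xs ! i = m"
proof -
  assume a: "j < length xs" "0 < m" "m < gg xs ! j"
  have e: "gg xs ! j = (LEAST m. 0 < m \<and> m \<notin> {gg xs ! i | i. conf xs j i})" using a(1) by (rule gg_nth)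
  have "m < (LEAST m. 0 < m \<and> m \<notin> {gg xs ! i | i. conf xs j i})" using a(3) e by simp
  then have "\<not> (0 < m \<and> m \<notin> {gg xs ! i | i. conf xs j i})" using not_less_Least by blast
  then show ?thesis using a(2) by blast
qed

lemma st_S01:
  assumes "start_type xs b \<in> {S0, S1}"
  shows "one_marked xs (int (mp xs 2 b) - 1) \<or> one_marked xs (int (mp xs 2 b) - 2)"
proof -
  have b: "1 \<le> b" and f: "fst (start_aux xs b) \<in> {S0, S1}"
    using assms unfolding start_type_def by (auto split: if_splits)
  show ?thesis
  proof (cases b)
    case 0 then show ?thesis using b by simp
  next
    case (Suc b')
    show ?thesis
    proof (cases b')
      case 0
      have "fst (start_aux xs (Suc 0)) \<in> {S0, S1}" using f Suc 0 by simp
      then show ?thesis unfolding Suc 0 start_aux.simps(2) Let_def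
        by (simp split: if_split_asm)
    next
      case (Suc b'')
      have "fst (start_aux xs (Suc (Suc b''))) \<in> {S0, S1}" using f Suc \<open>b = Suc b'\<close> by simp
      then show ?thesis unfolding Suc \<open>b = Suc b'\<close> start_aux.simps(3) Let_def
        by (simp split: if_split_asm)
    qed
  qed
qed

lemma sorted_nth_le: "sorted_wrt (\<ge>) (L::nat list) \<Longrightarrow> i \<le> j \<Longrightarrow> j < length L \<Longrightarrow> L ! j \<le> L ! i"
  by (metis le_neq_implies_less order_refl sorted_wrt_nth_less)

lemma marked_sorted: "sorted_wrt (\<ge>) xs \<Longrightarrow> sorted_wrt (\<ge>) (marked_parts xs i)"
  unfolding marked_parts_def sorted_wrt_map
  apply (rule sorted_wrt_filter)
  apply (auto simp: sorted_wrt_iff_nth_less intro: sorted_wrt_nth_less)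
  done

lemma marked_len: "length (marked_parts xs i) = N_mark xs i"
  unfolding marked_parts_def N_mark_def by simp

lemma marked_mem: "j < length xs \<Longrightarrow> gg xs ! j = i \<Longrightarrow> xs ! j \<in> set (marked_parts xs i)"
  unfolding marked_parts_def by auto

theorem corollary2p5:
  fixes k r p t :: nat and xs :: "nat list"
  assumes "r \<ge> 3" and "k \<ge> r"
    and "C_less k r p t xs"
    and "mpe xs 2 p \<ge> ereal (real (2 * t + 6))"
  shows "\<not> (2 * t + 2 \<in> set xs \<and> 2 * t + 4 \<in> set xs)"
proof
  assume both: "2 * t + 2 \<in> set xs \<and> 2 * t + 4 \<in> set xs"
  have C: "C_kr k r xs" and odd_bd: "\<forall>x\<in>set xs. odd x \<longrightarrow> x < 2 * t + 1"
    and pN: "p \<le> N_mark xs 2" and m1: "mpe xs 2 (p + 1) < ereal (real (2 * t + 1))"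
    and c4: "mpe xs 2 (p + 1) = ereal (real (2 * t)) \<longrightarrow> start_type xs (p + 1) \<in> {S0, S1}"
    using assms(3) unfolding C_less_def by auto
  have srt: "sorted_wrt (\<ge>) xs" using C unfolding C_kr_def is_partition_def by auto
  define L where "L = marked_parts xs 2"
  have Ls: "sorted_wrt (\<ge>) L" unfolding L_def using srt by (rule marked_sorted)
  have Ll: "length L = N_mark xs 2" unfolding L_def by (rule marked_len)
  have mpL: "\<And>b. b \<ge> 1 \<Longrightarrow> mp xs 2 b = L ! (b - 1)" unfolding L_def mp_def by simp
  have lo: "p \<ge> 1 \<Longrightarrow> L ! (p - 1) \<ge> 2 * t + 6"
  proof -
    assume "p \<ge> 1"
    then have "mpe xs 2 p = ereal (real (L ! (p - 1)))" using pN mpL unfolding mpe_def by auto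
    then show ?thesis using assms(4) by simp
  qed
  have hi: "p < length L \<Longrightarrow> L ! p < 2 * t + 1"
  proof -
    assume "p < length L"
    then have "mpe xs 2 (p + 1) = ereal (real (L ! p))" using Ll mpL[of "p+1"] unfolding mpe_def by auto
    then show ?thesis using m1 by simp
  qed
  have F1: "\<And>y. y \<in> set L \<Longrightarrow> y \<ge> 2 * t + 6 \<or> y \<le> 2 * t"
  proof -
    fix y assume "y \<in> set L"
    then obtain i where i: "i < length L" "y = L ! i" by (metis in_set_conv_nth)
    show "y \<ge> 2 * t + 6 \<or> y \<le> 2 * t"
    proof (cases "i < p")
      case True
      then have "L ! (p - 1) \<le> L ! i" using sorted_nth_le[OF Ls, of i "p - 1"] pN Ll by auto
      then show ?thesis using lo True i by auto
    next
      case False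
      then have "L ! i \<le> L ! p" using sorted_nth_le[OF Ls, of p i] i by auto
      then show ?thesis using hi False i by auto
    qed
  qed
  have F2: "\<And>j. j < length xs \<Longrightarrow> gg xs ! j = 2 \<Longrightarrow> xs ! j \<ge> 2 * t + 6 \<or> xs ! j \<le> 2 * t"
    using F1 marked_mem unfolding L_def by blast
  obtain a where a: "a < length xs" "xs ! a = 2 * t + 4" using both by (metis in_set_conv_nth)
  obtain c where c: "c < length xs" "xs ! c = 2 * t + 2" using both by (metis in_set_conv_nth)
  have ac: "a < c"
  proof (rule ccontr)
    assume "\<not> a < c"
    then have "xs ! a \<le> xs ! c" using sorted_nth_le[OF srt, of c a] a by auto
    then show False using a c by simp
  qed
  have confa: "\<And>i. conf xs a i \<Longrightarrow> 2 * t + 2 \<le> xs ! i \<and> xs ! i \<le> 2 * t + 4"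
  proof -
    fix i assume ci: "conf xs a i"
    then have "xs ! i \<le> xs ! a" using sorted_nth_le[OF srt, of a i] unfolding conf_def by auto
    then show "2 * t + 2 \<le> xs ! i \<and> xs ! i \<le> 2 * t + 4" using ci a unfolding conf_def by auto
  qed
  have ga2: "gg xs ! a \<noteq> 2" using F2[OF a(1)] a by auto
  have ga: "gg xs ! a = 1"
  proof (rule ccontr)
    assume "gg xs ! a \<noteq> 1"
    then have "2 < gg xs ! a" using ga2 gg_pos[OF a(1)] by auto
    then obtain i where i: "conf xs a i" "gg xs ! i = 2" using gg_min[OF a(1), of 2] by auto
    have "i < length xs" using i unfolding conf_def by auto
    then show False using F2[OF _ i(2)] confa[OF i(1)] by auto
  qed
  have cac: "\<And>i. c \<le> i \<Longrightarrow> i < length xs \<Longrightarrow> xs ! i = 2 * t + 2 \<Longrightarrow> gg xs ! i \<noteq> 1"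
  proof -
    fix i assume "c \<le> i" "i < length xs" "xs ! i = 2 * t + 2"
    then have "conf xs a i" using ac a unfolding conf_def by auto
    then show "gg xs ! i \<noteq> 1" using gg_diff ga by metis
  qed
  have gc: "2 < gg xs ! c"
  proof -
    have "gg xs ! c \<noteq> 1" using cac[OF le_refl c(1) c(2)] .
    moreover have "gg xs ! c \<noteq> 2" using F2[OF c(1)] c by auto
    moreover have "0 < gg xs ! c" using gg_pos[OF c(1)] .
    ultimately show ?thesis by linarith
  qed
  have confc: "\<And>i. conf xs c i \<Longrightarrow> 2 * t \<le> xs ! i \<and> xs ! i \<le> 2 * t + 2"
  proof -
    fix i assume ci: "conf xs c i"
    then have "xs ! i \<le> xs ! c" using sorted_nth_le[OF srt, of c i] unfolding conf_def by auto
    then show "2 * t \<le> xs ! i \<and> xs ! i \<le> 2 * t + 2" using ci c unfolding conf_def by auto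
  qed
  obtain i1 where i1: "conf xs c i1" "gg xs ! i1 = 2" using gg_min[OF c(1), of 2] gc by auto
  have i1l: "i1 < length xs" using i1 unfolding conf_def by auto
  have x1: "xs ! i1 = 2 * t" using F2[OF i1l i1(2)] confc[OF i1(1)] by auto
  obtain i0 where i0: "conf xs c i0" "gg xs ! i0 = 1" using gg_min[OF c(1), of 1] gc by auto
  have i0l: "i0 < length xs" "c < i0" using i0 unfolding conf_def by auto
  have x0: "xs ! i0 = 2 * t"
  proof -
    have "xs ! i0 \<noteq> 2 * t + 2" using cac[of i0] i0l i0 by auto
    moreover have "xs ! i0 \<noteq> 2 * t + 1"
    proof
      assume h: "xs ! i0 = 2 * t + 1"
      have "xs ! i0 \<in> set xs" using i0l(1) by simp
      then have "odd (xs ! i0) \<longrightarrow> xs ! i0 < 2 * t + 1" using odd_bd by blast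
      then show False using h by simp
    qed
    ultimately show ?thesis using confc[OF i0(1)] by auto
  qed
  have inL: "2 * t \<in> set L" using marked_mem[OF i1l i1(2)] x1 unfolding L_def by simp
  then obtain i where i: "i < length L" "L ! i = 2 * t" by (metis in_set_conv_nth)
  have ip: "p \<le> i"
  proof (rule ccontr)
    assume "\<not> p \<le> i"
    then have "L ! (p - 1) \<le> L ! i" using sorted_nth_le[OF Ls, of i "p - 1"] pN Ll by auto
    then show False using lo i \<open>\<not> p \<le> i\<close> by auto
  qed
  have pl: "p < length L" using ip i by auto
  have "L ! i \<le> L ! p" using sorted_nth_le[OF Ls ip i(1)] .
  then have Lp: "L ! p = 2 * t" using hi[OF pl] i by auto
  have mpp: "mp xs 2 (p + 1) = 2 * t" using mpL[of "p+1"] Lp by simp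
  have "mpe xs 2 (p + 1) = ereal (real (2 * t))" using pl Ll mpp unfolding mpe_def by auto
  then have "start_type xs (p + 1) \<in> {S0, S1}" using c4 by blast
  then have "one_marked xs (int (2 * t) - 1) \<or> one_marked xs (int (2 * t) - 2)"
    using st_S01[of xs "p + 1"] unfolding mpp by blast
  then obtain j where j: "j < length xs" "gg xs ! j = 1"
    "int (xs ! j) = int (2 * t) - 1 \<or> int (xs ! j) = int (2 * t) - 2"
    unfolding one_marked_def by blast
  have "i0 < j"
  proof (rule ccontr)
    assume "\<not> i0 < j"
    then have "xs ! i0 \<le> xs ! j" using sorted_nth_le[OF srt, of j i0] i0l by auto
    then show False using x0 j(3) by auto
  qed
  then have "conf xs i0 j" using j x0 unfolding conf_def by auto
  then show False using gg_diff i0 j by metis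
qed

end
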